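(* Let $X=X(\mathbb{Z}_n,S)$ be a circulant graph and let $x,y$ be distinct vertices of $X$. If perfect state transfer occurs on $X$ from $d^*e_x$ to $d^*e_y$, then $n$ is even and $y=x+\frac{n}{2}$.
   Context: For $S\subseteq\mathbb{Z}_n\setminus\{0\}$ with $S=-S$, the circulant graph $X(\mathbb{Z}_n,S)$ has vertex set $\mathbb{Z}_n$ and edge set $\{\{x,y\}\mid y-x\in S\}$. For a graph with symmetric arc set $\mathcal{A}$ ($t((x,y))=y$, $(x,y)^{-1}=(y,x)$): boundary matrix $d_{x,a}=\frac{1}{\sqrt{\deg x}}\delta_{x,t(a)}$, shift matrix $R_{a,b}=\delta_{a,b^{-1}}$, $U=R(2d^*d-I_{\mathcal{A}})$; $e_x$ is the standard unit vector. Perfect state transfer from $\Phi$ to a distinct state $\Psi$ means $U^\tau\Phi=\gamma\Psi$ for some $\tau\in\mathbb{Z}_{\ge1}$, $|\gamma|=1$. *)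

theory Defs
  imports Complex_Main
begin

text \<open>Circulant graph X(Z_n, S): vertices {0..<n} (representatives of Z_n),
  S a subset of {1..<n} (nonzero residues) closed under negation mod n.
  Arcs are ordered pairs (x,y) with y - x in S (mod n).\<close>

definition circ_vertices :: "nat \<Rightarrow> nat set" where
  "circ_vertices n = {0..<n}"

definition circ_conn_set :: "nat \<Rightarrow> nat set \<Rightarrow> bool" where
  "circ_conn_set n S \<longleftrightarrow> S \<subseteq> {1..<n} \<and> (\<forall>s\<in>S. (n - s) \<in> S)"

definition circ_arcs :: "nat \<Rightarrow> nat set \<Rightarrow> (nat \<times> nat) set" where
  "circ_arcs n S = {(x, y). x < n \<and> y < n \<and> (y + n - x) mod n \<in> S}"

text \<open>General graph given by vertex set V and symmetric arc set A; terminus t((x,y)) = y.\<close>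

definition arc_deg :: "('v \<times> 'v) set \<Rightarrow> 'v \<Rightarrow> nat" where
  "arc_deg A x = card {a \<in> A. snd a = x}"

definition bdry :: "('v \<times> 'v) set \<Rightarrow> 'v \<Rightarrow> ('v \<times> 'v) \<Rightarrow> complex" where
  "bdry A x a = (if x = snd a then complex_of_real (1 / sqrt (real (arc_deg A x))) else 0)"

definition shift :: "('v \<times> 'v) \<Rightarrow> ('v \<times> 'v) \<Rightarrow> complex" where
  "shift a b = (if a = prod.swap b then 1 else 0)"

definition coin :: "'v set \<Rightarrow> ('v \<times> 'v) set \<Rightarrow> ('v \<times> 'v) \<Rightarrow> ('v \<times> 'v) \<Rightarrow> complex" where
  "coin V A b c = 2 * (\<Sum>v\<in>V. cnj (bdry A v b) * bdry A v c) - (if b = c then 1 else 0)"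

text \<open>Vectors in C^A are functions on arcs (zero outside A).
  Action of U = R (2 d^* d - I) on such a vector.\<close>
definition walk_U :: "'v set \<Rightarrow> ('v \<times> 'v) set \<Rightarrow> (('v \<times> 'v) \<Rightarrow> complex) \<Rightarrow> (('v \<times> 'v) \<Rightarrow> complex)" where
  "walk_U V A \<psi> = (\<lambda>a. if a \<in> A then
      (\<Sum>b\<in>A. shift a b * (\<Sum>c\<in>A. coin V A b c * \<psi> c)) else 0)"

definition bdry_adj_e :: "('v \<times> 'v) set \<Rightarrow> 'v \<Rightarrow> (('v \<times> 'v) \<Rightarrow> complex)" where
  "bdry_adj_e A x = (\<lambda>a. if a \<in> A then cnj (bdry A x a) else 0)"

definition PST :: "'v set \<Rightarrow> ('v \<times> 'v) set \<Rightarrow> (('v \<times> 'v) \<Rightarrow> complex) \<Rightarrow> (('v \<times> 'v) \<Rightarrow> complex) \<Rightarrow> bool" where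
  "PST V A \<Phi> \<Psi> \<longleftrightarrow> \<Phi> \<noteq> \<Psi> \<and>
     (\<exists>\<tau>::nat. \<tau> \<ge> 1 \<and> (\<exists>\<gamma>::complex. norm \<gamma> = 1 \<and>
        (walk_U V A ^^ \<tau>) \<Phi> = (\<lambda>a. \<gamma> * \<Psi> a)))"

end

theory Submission
  imports Defs
begin

definition pull :: "('v \<Rightarrow> 'v) \<Rightarrow> ('v \<times> 'v) set \<Rightarrow> (('v \<times> 'v) \<Rightarrow> complex) \<Rightarrow> (('v \<times> 'v) \<Rightarrow> complex)" where
  "pull f A \<psi> = (\<lambda>a. if a \<in> A then \<psi> (map_prod f f a) else 0)"

lemma bdry_prod:
  "cnj (bdry A v b) * bdry A v c = (if v = snd b \<and> v = snd c then complex_of_real (1 / real (arc_deg A v)) else 0)"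
proof -
  have e: "cnj (complex_of_real (1 / sqrt (real d))) * complex_of_real (1 / sqrt (real d)) = complex_of_real (1 / real d)" for d :: nat
  proof -
    have "(1 / sqrt (real d)) * (1 / sqrt (real d)) = 1 / real d"
      by (simp add: real_sqrt_mult[symmetric])
    then show ?thesis by (metis complex_cnj_complex_of_real of_real_mult)
  qed
  show ?thesis unfolding bdry_def using e by auto
qed

lemma coin_formula:
  assumes "finite V" "snd b \<in> V"
  shows "coin V A b c = 2 * (if snd b = snd c then complex_of_real (1 / real (arc_deg A (snd b))) else 0) - (if b = c then 1 else 0)"
proof -
  have "(\<Sum>v\<in>V. cnj (bdry A v b) * bdry A v c) = (\<Sum>v\<in>V. if v = snd b then (if snd b = snd c then complex_of_real (1 / real (arc_deg A (snd b))) else 0) else 0)"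
    by (rule sum.cong) (auto simp: bdry_prod)
  also have "\<dots> = (if snd b = snd c then complex_of_real (1 / real (arc_deg A (snd b))) else 0)"
    using assms by (simp add: sum.delta)
  finally show ?thesis unfolding coin_def by simp
qed

lemma walk_commute:
  fixes f :: "'v \<Rightarrow> 'v"
  assumes finV: "finite V" and AV: "A \<subseteq> V \<times> V"
    and symA: "\<And>a b. (a, b) \<in> A \<Longrightarrow> (b, a) \<in> A"
    and injf: "inj_on f V" and fV: "f ` V \<subseteq> V"
    and hom: "\<And>a b. a \<in> V \<Longrightarrow> b \<in> V \<Longrightarrow> ((f a, f b) \<in> A \<longleftrightarrow> (a, b) \<in> A)"
  shows "walk_U V A (pull f A \<psi>) = pull f A (walk_U V A \<psi>)"
proof -
  define F where "F = map_prod f f"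
  have finA: "finite A" using AV finV by (meson finite_SigmaI rev_finite_subset)
  have fVV: "f ` V = V" using endo_inj_surj[OF finV fV injf] .
  have FA: "F ` A \<subseteq> A" using AV hom unfolding F_def by auto
  have injF: "inj_on F A" using injf AV unfolding F_def inj_on_def by (force simp: subset_iff)
  have bijF: "bij_betw F A A" using endo_inj_surj[OF finA FA injF] injF by (simp add: bij_betw_def)
  have deg: "arc_deg A (f v) = arc_deg A v" if "v \<in> V" for v
  proof -
    have "{a \<in> A. snd a = f v} = F ` {a \<in> A. snd a = v}"
    proof
      show "F ` {a \<in> A. snd a = v} \<subseteq> {a \<in> A. snd a = f v}" using FA F_def by auto
      show "{a \<in> A. snd a = f v} \<subseteq> F ` {a \<in> A. snd a = v}"
      proof
        fix a assume a: "a \<in> {a \<in> A. snd a = f v}"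
        obtain p q where pq: "a = (p, q)" by force
        have "p \<in> V" using a pq AV by auto
        then obtain p' where p': "p' \<in> V" "p = f p'" using fVV by blast
        have "(p', v) \<in> A" using hom[OF p'(1) that] a pq p' by auto
        then show "a \<in> F ` {a \<in> A. snd a = v}" using a pq p' F_def by force
      qed
    qed
    then show ?thesis unfolding arc_deg_def
      by (metis (no_types, lifting) card_image inj_on_subset injF mem_Collect_eq subsetI)
  qed
  have coinF: "coin V A (F b) (F c) = coin V A b c" if "b \<in> A" "c \<in> A" for b c
  proof -
    have sb: "snd b \<in> V" "snd c \<in> V" using that AV by auto
    have "snd (F b) = f (snd b)" "snd (F c) = f (snd c)" unfolding F_def by (cases b; cases c; simp)+
    moreover have "f (snd b) = f (snd c) \<longleftrightarrow> snd b = snd c" using injf sb inj_on_eq_iff by metis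
    moreover have "F b = F c \<longleftrightarrow> b = c" using injF that by (meson inj_on_eq_iff)
    moreover have "f (snd b) \<in> V" using fV sb by auto
    ultimately show ?thesis using coin_formula[OF finV] sb deg[OF sb(1)] deg[OF sb(2)] by simp
  qed
  have shiftF: "shift (F a) (F b) = shift a b" if "a \<in> A" "b \<in> A" for a b
  proof -
    have "prod.swap b \<in> A" using symA that by (cases b) auto
    moreover have "F (prod.swap b) = prod.swap (F b)" unfolding F_def by (cases b) auto
    ultimately have "F a = prod.swap (F b) \<longleftrightarrow> a = prod.swap b" using injF that by (metis inj_on_eq_iff)
    then show ?thesis unfolding shift_def by simp
  qed
  show ?thesis
  proof
    fix a
    show "walk_U V A (pull f A \<psi>) a = pull f A (walk_U V A \<psi>) a"
    proof (cases "a \<in> A")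
      case False then show ?thesis unfolding walk_U_def pull_def by simp
    next
      case True
      have Fa: "F a \<in> A" using FA True by auto
      have "pull f A (walk_U V A \<psi>) a = (\<Sum>b\<in>A. shift (F a) b * (\<Sum>c\<in>A. coin V A b c * \<psi> c))"
        using True Fa unfolding pull_def walk_U_def F_def by simp
      also have "\<dots> = (\<Sum>b\<in>A. shift (F a) (F b) * (\<Sum>c\<in>A. coin V A (F b) c * \<psi> c))"
        using sum.reindex_bij_betw[OF bijF, of "\<lambda>b. shift (F a) b * (\<Sum>c\<in>A. coin V A b c * \<psi> c)"] by simp
      also have "\<dots> = (\<Sum>b\<in>A. shift (F a) (F b) * (\<Sum>c\<in>A. coin V A (F b) (F c) * \<psi> (F c)))"
        using sum.reindex_bij_betw[OF bijF, of "\<lambda>c. coin V A (F _) c * \<psi> c"] by simp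
      also have "\<dots> = (\<Sum>b\<in>A. shift a b * (\<Sum>c\<in>A. coin V A b c * pull f A \<psi> c))"
        by (rule sum.cong, simp, rule arg_cong2[where f="(*)"], simp add: shiftF True,
            rule sum.cong, simp_all add: coinF[unfolded F_def] pull_def F_def)
      also have "\<dots> = walk_U V A (pull f A \<psi>) a" using True unfolding walk_U_def by simp
      finally show ?thesis by simp
    qed
  qed
qed

lemma modint: "a < n \<Longrightarrow> b < n \<Longrightarrow> int ((b + n - a) mod n) = (int b - int a) mod int n"
proof -
  assume h: "a < n" "b < n"
  have "int ((b + n - a) mod n) = int (b + n - a) mod int n" by (simp only: zmod_int)
  also have "int (b + n - a) = (int b - int a) + int n" using h by (simp add: of_nat_diff)
  also have "((int b - int a) + int n) mod int n = (int b - int a) mod int n" by (rule mod_add_self2)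
  finally show ?thesis .
qed

lemma trans_diff:
  fixes a b g n :: nat
  assumes "a < n" "b < n"
  shows "((b + g) mod n + n - (a + g) mod n) mod n = (b + n - a) mod n"
proof -
  have n: "n > 0" using assms by auto
  have "int (((b + g) mod n + n - (a + g) mod n) mod n) = (int ((b + g) mod n) - int ((a + g) mod n)) mod int n"
    using modint[of "(a + g) mod n" n "(b + g) mod n"] n by simp
  also have "\<dots> = (int (b + g) - int (a + g)) mod int n"
    by (simp add: zmod_int mod_diff_eq)
  also have "\<dots> = int ((b + n - a) mod n)" using modint[OF assms] by simp
  finally show ?thesis by simp
qed

lemma refl_diff:
  fixes a b c n :: nat
  assumes "a < n" "b < n" "c \<le> n"
  shows "((c + n - b) mod n + n - (c + n - a) mod n) mod n = (a + n - b) mod n"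
proof -
  have n: "n > 0" using assms by auto
  have "int (((c + n - b) mod n + n - (c + n - a) mod n) mod n) = (int ((c + n - b) mod n) - int ((c + n - a) mod n)) mod int n"
    using modint[of "(c + n - a) mod n" n "(c + n - b) mod n"] n by simp
  also have "\<dots> = (int (c + n - b) - int (c + n - a)) mod int n"
    by (simp add: zmod_int mod_diff_eq)
  also have "\<dots> = (int a - int b) mod int n" using assms by (simp add: of_nat_diff)
  also have "\<dots> = int ((a + n - b) mod n)" using modint[OF assms(2,1)] by simp
  finally show ?thesis by simp
qed

lemma sym_S:
  fixes a b n :: nat
  assumes "circ_conn_set n S" "a < n" "b < n" "(b + n - a) mod n \<in> S"
  shows "(a + n - b) mod n \<in> S"
proof -
  let ?d = "(b + n - a) mod n"
  have d: "?d \<in> {1..<n}" "n - ?d \<in> S" using assms unfolding circ_conn_set_def by auto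
  have "int ((a + n - b) mod n) = (- (int b - int a)) mod int n" using modint[OF assms(3,2)] by simp
  also have "\<dots> = int n - (int b - int a) mod int n"
  proof -
    have "(int b - int a) mod int n \<noteq> 0" using d modint[OF assms(2,3)] by simp
    then show ?thesis using zmod_zminus1_eq_if[of "int b - int a" "int n"] by presburger
  qed
  also have "\<dots> = int (n - ?d)" using d modint[OF assms(2,3)] by (simp add: of_nat_diff)
  finally show ?thesis using d by (metis of_nat_eq_iff)
qed

lemma final_arith:
  fixes x y n :: nat
  assumes "(y + y + n - x) mod n = x" "x < n" "y < n" "x \<noteq> y"
  shows "even n \<and> y = (x + n div 2) mod n"
proof -
  define m where "m = y + y + n - x"
  define q where "q = m div n"
  have e: "m = q * n + x" using div_mult_mod_eq[of m n] assms(1) unfolding q_def m_def by simp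
  have "m < 3 * n" using assms unfolding m_def by linarith
  then have "q < 3" unfolding q_def by (simp add: div_less_iff_less_mult mult.commute)
  then consider "q = 0" | "q = 1" | "q = 2" by linarith
  then show ?thesis
  proof cases
    case 1 then have h: "y + y + n = x + x" using e assms unfolding m_def by simp
    then have n2: "n = 2 * (x - y)" by linarith
    then have "n div 2 = x - y" by simp
    then have "x + n div 2 = y + n" using h by linarith
    then show ?thesis using n2 assms by simp
  next
    case 2 then have "y + y + n = n + x + x" using e assms unfolding m_def by simp
    then show ?thesis using assms by simp
  next
    case 3 then have h: "y + y = x + x + n" using e assms unfolding m_def by simp
    then have n2: "n = 2 * (y - x)" by linarith
    then have "n div 2 = y - x" by simp
    then have "x + n div 2 = y" using h by linarith
    then show ?thesis using n2 assms by simp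
  qed
qed


lemma deg_inv:
  fixes f :: "'v \<Rightarrow> 'v"
  assumes finV: "finite V" and AV: "A \<subseteq> V \<times> V"
    and injf: "inj_on f V" and fV: "f ` V \<subseteq> V"
    and hom: "\<And>a b. a \<in> V \<Longrightarrow> b \<in> V \<Longrightarrow> ((f a, f b) \<in> A \<longleftrightarrow> (a, b) \<in> A)"
    and v: "v \<in> V"
  shows "arc_deg A (f v) = arc_deg A v"
proof -
  define F where "F = map_prod f f"
  have fVV: "f ` V = V" using endo_inj_surj[OF finV fV injf] .
  have FA: "F ` A \<subseteq> A" using AV hom unfolding F_def by auto
  have injF: "inj_on F A" using injf AV unfolding F_def inj_on_def by (force simp: subset_iff)
  have "{a \<in> A. snd a = f v} = F ` {a \<in> A. snd a = v}"
  proof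
    show "F ` {a \<in> A. snd a = v} \<subseteq> {a \<in> A. snd a = f v}" using FA F_def by auto
    show "{a \<in> A. snd a = f v} \<subseteq> F ` {a \<in> A. snd a = v}"
    proof
      fix a assume a: "a \<in> {a \<in> A. snd a = f v}"
      obtain p q where pq: "a = (p, q)" by force
      have "p \<in> V" using a pq AV by auto
      then obtain p' where p': "p' \<in> V" "p = f p'" using fVV by blast
      have "(p', v) \<in> A" using hom[OF p'(1) v] a pq p' by auto
      then show "a \<in> F ` {a \<in> A. snd a = v}" using a pq p' F_def by force
    qed
  qed
  then show ?thesis unfolding arc_deg_def
    by (metis (no_types, lifting) card_image inj_on_subset injF mem_Collect_eq subsetI)
qed

lemma pull_bdry:
  fixes f :: "'v \<Rightarrow> 'v"
  assumes finV: "finite V" and AV: "A \<subseteq> V \<times> V"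
    and injf: "inj_on f V" and fV: "f ` V \<subseteq> V"
    and hom: "\<And>a b. a \<in> V \<Longrightarrow> b \<in> V \<Longrightarrow> ((f a, f b) \<in> A \<longleftrightarrow> (a, b) \<in> A)"
    and z: "z \<in> V"
  shows "pull f A (bdry_adj_e A (f z)) = bdry_adj_e A z"
proof
  fix a
  show "pull f A (bdry_adj_e A (f z)) a = bdry_adj_e A z a"
  proof (cases "a \<in> A")
    case False then show ?thesis unfolding pull_def bdry_adj_e_def by simp
  next
    case True
    obtain p q where pq: "a = (p, q)" by force
    have pV: "p \<in> V" "q \<in> V" using True pq AV by auto
    have inA: "(f p, f q) \<in> A" using hom[OF pV] True pq by simp
    have eq: "f z = f q \<longleftrightarrow> z = q" using injf pV z inj_on_eq_iff by metis
    have dg: "arc_deg A (f z) = arc_deg A z" using deg_inv[OF finV AV injf fV hom z] .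
    show ?thesis using True inA eq dg pq unfolding pull_def bdry_adj_e_def bdry_def by auto
  qed
qed

lemma pow_commute:
  fixes f :: "'v \<Rightarrow> 'v"
  assumes finV: "finite V" and AV: "A \<subseteq> V \<times> V"
    and symA: "\<And>a b. (a, b) \<in> A \<Longrightarrow> (b, a) \<in> A"
    and injf: "inj_on f V" and fV: "f ` V \<subseteq> V"
    and hom: "\<And>a b. a \<in> V \<Longrightarrow> b \<in> V \<Longrightarrow> ((f a, f b) \<in> A \<longleftrightarrow> (a, b) \<in> A)"
  shows "(walk_U V A ^^ k) (pull f A \<psi>) = pull f A ((walk_U V A ^^ k) \<psi>)"
  by (induction k) (simp_all add: walk_commute[OF assms])

lemma pull_scale: "pull f A (\<lambda>a. \<gamma> * \<psi> a) = (\<lambda>a. \<gamma> * pull f A \<psi> a)"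
  unfolding pull_def by auto

lemma zero_diff:
  fixes a b n :: nat
  assumes "a < n" "b < n" "(b + n - a) mod n = 0"
  shows "a = b"
proof -
  define m where "m = b + n - a"
  define q where "q = m div n"
  have e: "m = q * n" using div_mult_mod_eq[of m n] assms(3) unfolding q_def m_def by simp
  have "m < 2 * n" "m > 0" using assms unfolding m_def by linarith+
  have "q < 2" using \<open>m < 2 * n\<close> unfolding q_def by (simp add: div_less_iff_less_mult mult.commute)
  moreover have "q \<noteq> 0" using e \<open>m > 0\<close> by (metis mult_zero_left less_irrefl)
  ultimately have "q = 1" by linarith
  then show ?thesis using e assms unfolding m_def by simp
qed

theorem lemma4p2:
  fixes n :: nat and S :: "nat set" and x y :: nat
  assumes "circ_conn_set n S"
    and "x < n" and "y < n" and "x \<noteq> y"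
    and "PST (circ_vertices n) (circ_arcs n S)
           (bdry_adj_e (circ_arcs n S) x) (bdry_adj_e (circ_arcs n S) y)"
  shows "even n \<and> y = (x + n div 2) mod n"
proof -
  define V where "V = circ_vertices n"
  define A where "A = circ_arcs n S"
  define W where "W = walk_U V A"
  define \<Phi> where "\<Phi> = bdry_adj_e A"
  have cs: "circ_conn_set n S" by fact
  have n0: "n > 0" using assms by auto
  have finV: "finite V" unfolding V_def circ_vertices_def by simp
  have AV: "A \<subseteq> V \<times> V" unfolding A_def V_def circ_arcs_def circ_vertices_def by auto
  have symA: "\<And>a b. (a, b) \<in> A \<Longrightarrow> (b, a) \<in> A"
    unfolding A_def circ_arcs_def using sym_S[OF cs] by auto
  from assms(5) obtain \<tau> \<gamma> where ne: "\<Phi> x \<noteq> \<Phi> y" and g1: "norm \<gamma> = 1"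
    and tr: "(W ^^ \<tau>) (\<Phi> x) = (\<lambda>a. \<gamma> * \<Phi> y a)"
    unfolding PST_def W_def \<Phi>_def A_def V_def by blast
  have inV: "v \<in> V \<longleftrightarrow> v < n" for v unfolding V_def circ_vertices_def by simp
  define g where "g = x + n - y"
  define T where "T = (\<lambda>v. (v + g) mod n)"
  have T_hom: "(T a, T b) \<in> A \<longleftrightarrow> (a, b) \<in> A" if "a \<in> V" "b \<in> V" for a b
    using that trans_diff[of a n b g] n0 unfolding T_def A_def circ_arcs_def inV by simp
  have T_V: "T ` V \<subseteq> V" using n0 unfolding T_def by (auto simp: inV)
  have T_inj: "inj_on T V"
  proof (rule inj_onI)
    fix a b assume ab: "a \<in> V" "b \<in> V" "T a = T b"
    then have "(b + n - a) mod n = 0" using trans_diff[of a n b g] n0 unfolding T_def inV by simp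
    then show "a = b" using zero_diff ab unfolding inV by metis
  qed
  define c where "c = (x + y) mod n"
  define R where "R = (\<lambda>v. (c + n - v) mod n)"
  have cn: "c \<le> n" unfolding c_def using n0 by (simp add: order_less_imp_le)
  have R_hom: "(R a, R b) \<in> A \<longleftrightarrow> (a, b) \<in> A" if "a \<in> V" "b \<in> V" for a b
    using that refl_diff[of a n b c] cn n0 sym_S[OF cs, of a b] sym_S[OF cs, of b a]
    unfolding R_def A_def circ_arcs_def inV by auto
  have R_V: "R ` V \<subseteq> V" using n0 unfolding R_def by (auto simp: inV)
  have R_inj: "inj_on R V"
  proof (rule inj_onI)
    fix a b assume ab: "a \<in> V" "b \<in> V" "R a = R b"
    then have "(a + n - b) mod n = 0" using refl_diff[of a n b c] cn n0 unfolding R_def inV by simp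
    then show "a = b" using zero_diff ab unfolding inV by metis
  qed
  define w where "w = (y + y + n - x) mod n"
  have wV: "w \<in> V" unfolding w_def inV using n0 by simp
  have Ty: "T y = x" unfolding T_def g_def using assms by simp
  have Tw: "T w = y"
  proof -
    have "T w = (y + y + n - x + (x + n - y)) mod n" unfolding T_def w_def g_def by (simp add: mod_add_left_eq)
    also have "y + y + n - x + (x + n - y) = y + n + n" using assms by simp
    finally show ?thesis using assms by simp
  qed
  have Rxy: "R y = x" "R x = y"
  proof -
    have "int (R y) = (int c - int y) mod int n" unfolding R_def using modint[of y n c] assms c_def n0 by (simp add: add.commute)
    also have "\<dots> = (int (x + y) - int y) mod int n" unfolding c_def by (simp add: zmod_int mod_diff_left_eq)
    also have "\<dots> = int x" using assms by simp
    finally show "R y = x" by simp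
    have "int (R x) = (int c - int x) mod int n" unfolding R_def using modint[of x n c] assms c_def n0 by (simp add: add.commute)
    also have "\<dots> = (int (x + y) - int x) mod int n" unfolding c_def by (simp add: zmod_int mod_diff_left_eq)
    also have "\<dots> = int y" using assms by simp
    finally show "R x = y" by simp
  qed
  have yV: "y \<in> V" "x \<in> V" using assms inV by auto
  have e1: "(W ^^ \<tau>) (\<Phi> y) = (\<lambda>a. \<gamma> * \<Phi> w a)"
  proof -
    have "\<Phi> y = pull T A (\<Phi> x)" using pull_bdry[OF finV AV T_inj T_V T_hom yV(1)] Ty unfolding \<Phi>_def by simp
    then have "(W ^^ \<tau>) (\<Phi> y) = pull T A ((W ^^ \<tau>) (\<Phi> x))"
      using pow_commute[OF finV AV symA T_inj T_V T_hom] unfolding W_def by simp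
    also have "\<dots> = (\<lambda>a. \<gamma> * pull T A (\<Phi> y) a)" using tr pull_scale by metis
    also have "pull T A (\<Phi> y) = \<Phi> w" using pull_bdry[OF finV AV T_inj T_V T_hom wV] Tw unfolding \<Phi>_def by simp
    finally show ?thesis .
  qed
  have e2: "(W ^^ \<tau>) (\<Phi> y) = (\<lambda>a. \<gamma> * \<Phi> x a)"
  proof -
    have "\<Phi> y = pull R A (\<Phi> x)" using pull_bdry[OF finV AV R_inj R_V R_hom yV(1)] Rxy unfolding \<Phi>_def by simp
    then have "(W ^^ \<tau>) (\<Phi> y) = pull R A ((W ^^ \<tau>) (\<Phi> x))"
      using pow_commute[OF finV AV symA R_inj R_V R_hom] unfolding W_def by simp
    also have "\<dots> = (\<lambda>a. \<gamma> * pull R A (\<Phi> y) a)" using tr pull_scale by metis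
    also have "pull R A (\<Phi> y) = \<Phi> x" using pull_bdry[OF finV AV R_inj R_V R_hom yV(2)] Rxy unfolding \<Phi>_def by simp
    finally show ?thesis .
  qed
  have g0: "\<gamma> \<noteq> 0" using g1 by auto
  have Phiw: "\<Phi> w a = \<Phi> x a" for a
  proof -
    have "\<gamma> * \<Phi> w a = \<gamma> * \<Phi> x a" using e1 e2 by metis
    then show ?thesis using g0 by simp
  qed
  have "S \<noteq> {}"
  proof
    assume "S = {}"
    then have "A = {}" unfolding A_def circ_arcs_def by simp
    then have "\<Phi> x = \<Phi> y" unfolding \<Phi>_def bdry_adj_e_def by simp
    then show False using ne by simp
  qed
  then obtain s where s: "s \<in> S" by blast
  have s1: "s \<ge> 1" "s < n" using s cs unfolding circ_conn_set_def by auto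
  define a0 where "a0 = ((x + s) mod n, x)"
  have "((x + s) mod n + n - x) mod n = s"
    using trans_diff[of 0 n s x] s1 assms by (simp add: add.commute)
  then have a0A: "a0 \<in> A" using sym_S[OF cs, of x "(x + s) mod n"] s n0 assms
    unfolding a0_def A_def circ_arcs_def by simp
  have finA: "finite A" using AV finV by (meson finite_SigmaI rev_finite_subset)
  have "arc_deg A x > 0" unfolding arc_deg_def
    using a0A finA by (metis (mono_tags, lifting) a0_def card_gt_0_iff empty_iff finite_subset mem_Collect_eq snd_conv subsetI)
  then have "\<Phi> x a0 \<noteq> 0" using a0A unfolding \<Phi>_def bdry_adj_e_def bdry_def a0_def by simp
  then have "w = x" using Phiw[of a0] a0A unfolding \<Phi>_def bdry_adj_e_def bdry_def a0_def by (auto split: if_splits)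
  then show ?thesis using final_arith assms unfolding w_def by blast
qed

end
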